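(* Let $X$ be a complete CAT(1) space with $\mathrm{Diam}(X)<\pi/2$ and $T\colon X\to X$ a firmly vicinal mapping. Then for each $x\in X$, $\{T^nx\}$ is $\Delta$-convergent to an element of $\mathrm{Fix}(T)$.
   Context: A CAT(1) space is a $\pi$-geodesic metric space in which every geodesic triangle of perimeter $<2\pi$ satisfies the CAT(1) comparison inequality relative to comparison triangles in the unit sphere $\mathbb S^2$. $\{x_n\}$ is $\Delta$-convergent to $p$ if for every subsequence $\{x_{n_i}\}$, $p$ is the unique point $z$ minimizing $\limsup_i d(x_{n_i},z)$. With $C_z=\cos d(Tz,z)$, $T$ is firmly vicinal if for all $x,y\in X$: $\bigl(C_x^2(1+C_y^2)C_y+C_y^2(1+C_x^2)C_x\bigr)\cos d(Tx,Ty)\ge C_x^2(1+C_y^2)\cos d(Tx,y)+C_y^2(1+C_x^2)\cos d(Ty,x)$. *)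

theory Defs
  imports "HOL-Analysis.Analysis"
begin

definition S2 :: "(real^3) set" where
  "S2 = {u. norm u = 1}"

definition sdist :: "real^3 \<Rightarrow> real^3 \<Rightarrow> real" where
  "sdist u v = arccos (u \<bullet> v)"

definition geodesic_path :: "'a::metric_space set \<Rightarrow> (real \<Rightarrow> 'a) \<Rightarrow> 'a \<Rightarrow> 'a \<Rightarrow> bool" where
  "geodesic_path X \<gamma> x y \<longleftrightarrow>
     \<gamma> 0 = x \<and> \<gamma> (dist x y) = y \<and> (\<forall>s\<in>{0..dist x y}. \<gamma> s \<in> X) \<and>
     (\<forall>s\<in>{0..dist x y}. \<forall>t\<in>{0..dist x y}. dist (\<gamma> s) (\<gamma> t) = \<bar>s - t\<bar>)"

definition pi_geodesic :: "'a::metric_space set \<Rightarrow> bool" where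
  "pi_geodesic X \<longleftrightarrow> (\<forall>x\<in>X. \<forall>y\<in>X. dist x y < pi \<longrightarrow> (\<exists>\<gamma>. geodesic_path X \<gamma> x y))"

(* A point g(s) of a side [a,b] has comparison point u' on [a',b']
   characterised by sdist a' u' = s and sdist u' b' = d(a,b) - s. *)
definition cat1_ineq :: "'a::metric_space \<Rightarrow> 'a \<Rightarrow> 'a \<Rightarrow> (real \<Rightarrow> 'a) \<Rightarrow> (real \<Rightarrow> 'a) \<Rightarrow> (real \<Rightarrow> 'a) \<Rightarrow> bool" where
  "cat1_ineq p q r g1 g2 g3 \<longleftrightarrow>
    (\<forall>p' q' r'. p' \<in> S2 \<and> q' \<in> S2 \<and> r' \<in> S2 \<and>
       sdist p' q' = dist p q \<and> sdist q' r' = dist q r \<and> sdist r' p' = dist r p \<longrightarrow>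
       (\<forall>(\<gamma>, a, b, a', b') \<in> {(g1, p, q, p', q'), (g2, q, r, q', r'), (g3, r, p, r', p')}.
        \<forall>(\<delta>, c, e, c', e') \<in> {(g1, p, q, p', q'), (g2, q, r, q', r'), (g3, r, p, r', p')}.
        \<forall>s t u' v'. s \<in> {0..dist a b} \<and> t \<in> {0..dist c e} \<and> u' \<in> S2 \<and> v' \<in> S2 \<and>
           sdist a' u' = s \<and> sdist u' b' = dist a b - s \<and>
           sdist c' v' = t \<and> sdist v' e' = dist c e - t \<longrightarrow>
           dist (\<gamma> s) (\<delta> t) \<le> sdist u' v'))"

definition CAT1_space :: "'a::metric_space set \<Rightarrow> bool" where
  "CAT1_space X \<longleftrightarrow> pi_geodesic X \<and>
    (\<forall>p\<in>X. \<forall>q\<in>X. \<forall>r\<in>X. \<forall>g1 g2 g3.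
       geodesic_path X g1 p q \<and> geodesic_path X g2 q r \<and> geodesic_path X g3 r p \<and>
       dist p q + dist q r + dist r p < 2 * pi \<longrightarrow> cat1_ineq p q r g1 g2 g3)"

definition firmly_vicinal :: "'a::metric_space set \<Rightarrow> ('a \<Rightarrow> 'a) \<Rightarrow> bool" where
  "firmly_vicinal X T \<longleftrightarrow> (\<forall>x\<in>X. \<forall>y\<in>X.
     let Cx = cos (dist (T x) x); Cy = cos (dist (T y) y) in
     (Cx\<^sup>2 * (1 + Cy\<^sup>2) * Cy + Cy\<^sup>2 * (1 + Cx\<^sup>2) * Cx) * cos (dist (T x) (T y))
       \<ge> Cx\<^sup>2 * (1 + Cy\<^sup>2) * cos (dist (T x) y) + Cy\<^sup>2 * (1 + Cx\<^sup>2) * cos (dist (T y) x))"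

definition Delta_convergent :: "'a::metric_space set \<Rightarrow> (nat \<Rightarrow> 'a) \<Rightarrow> 'a \<Rightarrow> bool" where
  "Delta_convergent X x p \<longleftrightarrow> p \<in> X \<and>
     (\<forall>r::nat\<Rightarrow>nat. strict_mono r \<longrightarrow>
        (\<forall>z\<in>X. z \<noteq> p \<longrightarrow>
           limsup (\<lambda>i. ereal (dist (x (r i)) p)) < limsup (\<lambda>i. ereal (dist (x (r i)) z))))"

end

theory Submission
  imports Defs
begin



definition Gl :: "(nat \<Rightarrow> real) \<Rightarrow> real" where
  "Gl w = real_of_ereal (liminf (\<lambda>n. ereal (w n)))"

lemma Gl_eq:
  assumes "\<And>n. lo \<le> w n" "\<And>n. w n \<le> hi"
  shows "liminf (\<lambda>n. ereal (w n)) = ereal (Gl w)" "lo \<le> Gl w" "Gl w \<le> hi"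
proof -
  have a: "ereal lo \<le> liminf (\<lambda>n. ereal (w n))"
    by (rule Liminf_bounded) (use assms in auto)
  have b: "liminf (\<lambda>n. ereal (w n)) \<le> ereal hi"
    by (rule Liminf_le) (use assms in auto)
  from a b obtain r where r: "liminf (\<lambda>n. ereal (w n)) = ereal r"
    by (cases "liminf (\<lambda>n. ereal (w n))") auto
  show "liminf (\<lambda>n. ereal (w n)) = ereal (Gl w)" using r by (simp add: Gl_def)
  show "lo \<le> Gl w" using a r by (simp add: Gl_def)
  show "Gl w \<le> hi" using b r by (simp add: Gl_def)
qed

lemma Gl_ev:
  assumes "\<And>n. lo \<le> w n" "\<And>n. w n \<le> hi" "s < Gl w"
  shows "eventually (\<lambda>n. s < w n) sequentially"
proof -
  have "ereal s < liminf (\<lambda>n. ereal (w n))" using Gl_eq(1)[OF assms(1,2)] assms(3) by simp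
  from less_LiminfD[OF this] show ?thesis by simp
qed

lemma Gl_ge:
  assumes "\<And>n. lo \<le> w n" "\<And>n. w n \<le> hi"
    and "\<And>s. s < L \<Longrightarrow> eventually (\<lambda>n. s < w n) sequentially"
  shows "L \<le> Gl w"
proof -
  have "ereal L \<le> liminf (\<lambda>n. ereal (w n))"
    unfolding le_Liminf_iff
  proof (intro allI impI)
    fix y assume "y < ereal L"
    show "\<forall>\<^sub>F x in sequentially. y < ereal (w x)"
    proof (cases y)
      case (real r) with \<open>y < ereal L\<close> have "r < L" by simp
      from assms(3)[OF this] show ?thesis by eventually_elim (simp add: real)
    next
      case PInf with \<open>y < ereal L\<close> show ?thesis by simp
    next
      case MInf then show ?thesis by simp
    qed
  qed
  then show ?thesis using Gl_eq(1)[OF assms(1,2)] by simp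
qed

lemma Gl_freq:
  assumes "\<And>n. lo \<le> w n" "\<And>n. w n \<le> hi" "Gl w < s"
  shows "frequently (\<lambda>n. w n < s) sequentially"
proof (rule ccontr)
  assume "\<not> ?thesis"
  then have ev: "eventually (\<lambda>n. s \<le> w n) sequentially"
    by (simp add: not_frequently not_less)
  have "s \<le> Gl w"
  proof (rule Gl_ge[OF assms(1,2)])
    fix t assume "t < s" then show "eventually (\<lambda>n. t < w n) sequentially"
      using ev by (auto elim: eventually_mono)
  qed
  with assms(3) show False by simp
qed

lemma cos_lip: fixes a b :: real shows "\<bar>cos a - cos b\<bar> \<le> \<bar>a - b\<bar>"
proof -
  have "\<bar>cos a - cos b\<bar> = 2 * \<bar>sin ((a + b) / 2)\<bar> * \<bar>sin ((b - a) / 2)\<bar>"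
    by (simp add: cos_diff_cos abs_mult)
  also have "\<dots> \<le> 2 * 1 * \<bar>(b - a) / 2\<bar>"
    by (intro mult_mono abs_sin_le_one abs_sin_x_le_abs_x) auto
  finally show ?thesis by simp
qed




lemma Gl_comb:
  assumes "\<And>n. \<bar>w n\<bar> \<le> 1" "\<And>n. \<bar>w1 n\<bar> \<le> 1" "\<And>n. \<bar>w2 n\<bar> \<le> 1" "c > 0"
    and "\<And>n. w n \<ge> c * (w1 n + w2 n)"
  shows "Gl w \<ge> c * (Gl w1 + Gl w2)"
proof (rule Gl_ge[of "-1" w 1])
  fix s assume s: "s < c * (Gl w1 + Gl w2)"
  define e where "e = (Gl w1 + Gl w2 - s / c) / 2"
  have e: "e > 0" using s \<open>c>0\<close> by (simp add: e_def field_simps)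
  have "eventually (\<lambda>n. Gl w1 - e < w1 n) sequentially"
    by (rule Gl_ev[of "-1" _ 1]) (use assms e in \<open>auto simp: abs_le_iff\<close>)
  moreover have "eventually (\<lambda>n. Gl w2 - e < w2 n) sequentially"
    by (rule Gl_ev[of "-1" _ 1]) (use assms e in \<open>auto simp: abs_le_iff\<close>)
  ultimately show "eventually (\<lambda>n. s < w n) sequentially"
  proof eventually_elim
    case (elim n)
    have "s / c < w1 n + w2 n" 
    proof -
      have "2*e = Gl w1 + Gl w2 - s / c" unfolding e_def by simp
      then show ?thesis using elim by linarith
    qed
    then have "s < c * (w1 n + w2 n)" using \<open>c>0\<close> by (simp add: field_simps)
    then show ?case using assms(5)[of n] by simp
  qed
qed (use assms in \<open>auto simp: abs_le_iff\<close>)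

lemma Gl_lip:
  assumes "\<And>n. \<bar>w n\<bar> \<le> 1" "\<And>n. \<bar>w1 n\<bar> \<le> 1" "\<And>n. w n \<ge> w1 n - e"
  shows "Gl w \<ge> Gl w1 - e"
proof (rule Gl_ge[of "-1" w 1])
  fix s assume s: "s < Gl w1 - e"
  have "eventually (\<lambda>n. s + e < w1 n) sequentially"
    by (rule Gl_ev[of "-1" _ 1]) (use assms s in \<open>auto simp: abs_le_iff\<close>)
  then show "eventually (\<lambda>n. s < w n) sequentially"
  proof (rule eventually_mono)
    fix n assume "s + e < w1 n" then show "s < w n" using assms(3)[of n] by linarith
  qed
qed (use assms in \<open>auto simp: abs_le_iff\<close>)

lemma sphere_triangle:
  fixes a b c :: real
  assumes "0 \<le> a" "0 \<le> b" "0 \<le> c" "a + b < pi" "c \<le> a + b" "a \<le> b + c" "b \<le> a + c"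
  shows "\<exists>x p z :: real^3. norm x = 1 \<and> norm p = 1 \<and> norm z = 1 \<and>
           x \<bullet> p = cos a \<and> x \<bullet> z = cos b \<and> p \<bullet> z = cos c"
proof -
  define e1 :: "real^3" where "e1 = axis 1 1"
  define e2 :: "real^3" where "e2 = axis 2 1"
  define e3 :: "real^3" where "e3 = axis 3 1"
  have o: "e1 \<bullet> e1 = 1" "e2 \<bullet> e2 = 1" "e3 \<bullet> e3 = 1" "e1 \<bullet> e2 = 0" "e1 \<bullet> e3 = 0" "e2 \<bullet> e3 = 0"
    "e2 \<bullet> e1 = 0" "e3 \<bullet> e1 = 0" "e3 \<bullet> e2 = 0"
    by (simp_all add: e1_def e2_def e3_def inner_axis_axis)
  define \<alpha> where "\<alpha> = (if a = 0 \<or> b = 0 then 1 else (cos c - cos a * cos b) / (sin a * sin b))"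
  have al: "\<alpha>\<^sup>2 \<le> 1 \<and> (a \<noteq> 0 \<and> b \<noteq> 0 \<longrightarrow> sin a * sin b * \<alpha> = cos c - cos a * cos b)"
  proof (cases "a = 0 \<or> b = 0")
    case True then show ?thesis by (auto simp: \<alpha>_def)
  next
    case False
    have sa: "sin a > 0" using False assms by (intro sin_gt_zero) auto
    have sb: "sin b > 0" using False assms by (intro sin_gt_zero) auto
    have "cos c \<le> cos \<bar>a - b\<bar>" using assms by (intro cos_monotone_0_pi_le) auto
    also have "cos \<bar>a - b\<bar> = cos a * cos b + sin a * sin b" by (simp add: abs_if cos_diff)
    finally have h1: "cos c - cos a * cos b \<le> sin a * sin b" by simp
    have "cos (a + b) \<le> cos c" using assms by (intro cos_monotone_0_pi_le) auto
    then have h2: "- (sin a * sin b) \<le> cos c - cos a * cos b" by (simp add: cos_add)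
    have pos: "sin a * sin b > 0" using sa sb by simp
    have "\<bar>\<alpha>\<bar> \<le> 1" using False h1 h2 pos by (simp add: \<alpha>_def abs_le_iff divide_le_eq_1 le_divide_eq)
    then have "\<alpha>\<^sup>2 \<le> 1" by (simp add: abs_le_square_iff[of \<alpha> 1, simplified])
    with False pos show ?thesis by (auto simp: \<alpha>_def)
  qed
  define \<beta> where "\<beta> = sqrt (1 - \<alpha>\<^sup>2)"
  have be: "\<beta>\<^sup>2 = 1 - \<alpha>\<^sup>2" using al by (simp add: \<beta>_def)
  define x where "x = e1"
  define p where "p = cos a *\<^sub>R e1 + sin a *\<^sub>R e2"
  define z where "z = cos b *\<^sub>R e1 + (sin b * \<alpha>) *\<^sub>R e2 + (sin b * \<beta>) *\<^sub>R e3"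
  have n1: "norm x = 1" by (simp add: x_def e1_def)
  have "p \<bullet> p = 1" by (simp add: p_def inner_add_left inner_add_right o power2_eq_square[symmetric])
  then have n2: "norm p = 1" by (simp add: norm_eq_sqrt_inner)
  have "z \<bullet> z = (cos b)\<^sup>2 + (sin b)\<^sup>2 * (\<alpha>\<^sup>2 + \<beta>\<^sup>2)"
    by (simp add: z_def inner_add_left inner_add_right o power2_eq_square algebra_simps)
  then have "z \<bullet> z = 1" using be by simp
  then have n3: "norm z = 1" by (simp add: norm_eq_sqrt_inner)
  have i1: "x \<bullet> p = cos a" by (simp add: x_def p_def inner_add_right o)
  have i2: "x \<bullet> z = cos b" by (simp add: x_def z_def inner_add_right o)
  have "p \<bullet> z = cos a * cos b + sin a * sin b * \<alpha>"
    by (simp add: p_def z_def inner_add_left inner_add_right o algebra_simps)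
  also have "\<dots> = cos c"
  proof (cases "a = 0 \<or> b = 0")
    case True
    then have "c = a + b" using assms by auto
    with True show ?thesis by auto
  next
    case False with al show ?thesis by simp
  qed
  finally show ?thesis using n1 n2 n3 i1 i2 by blast
qed




lemma cat1_use:
  assumes "cat1_ineq p q r g1 g2 g3" "p' \<in> S2" "q' \<in> S2" "r' \<in> S2"
    "sdist p' q' = dist p q" "sdist q' r' = dist q r" "sdist r' p' = dist r p"
    "s \<in> {0..dist p q}" "t \<in> {0..dist r p}" "u' \<in> S2" "v' \<in> S2"
    "sdist p' u' = s" "sdist u' q' = dist p q - s" "sdist r' v' = t" "sdist v' p' = dist r p - t"
  shows "dist (g1 s) (g3 t) \<le> sdist u' v'"
  using assms unfolding cat1_ineq_def
  apply -
  apply (erule allE[of _ p'], erule allE[of _ q'], erule allE[of _ r'])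
  apply (drule mp)
   apply (simp; fail)
  apply (drule bspec[where x="(g1,p,q,p',q')"])
   apply (simp; fail)
  apply (simp only: case_prod_conv)
  apply (drule bspec[where x="(g3,r,p,r',p')"])
   apply (simp; fail)
  apply (simp only: case_prod_conv)
  done

lemma unit_inner_le: fixes u v :: "real^3" assumes "norm u = 1" "norm v = 1" shows "\<bar>u \<bullet> v\<bar> \<le> 1"
  using Cauchy_Schwarz_ineq2[of u v] assms by simp

lemma midpoint:
  fixes X :: "'a::metric_space set"
  assumes cat: "CAT1_space X" and small: "\<forall>a\<in>X. \<forall>b\<in>X. dist a b < pi/2"
    and pX: "p \<in> X" and zX: "z \<in> X"
  shows "\<exists>m\<in>X. \<forall>x\<in>X. cos (dist x p) + cos (dist x z) \<le> 2 * cos (dist p z / 2) * cos (dist x m)"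
proof -
  have sp: "dist a b < pi" if "a \<in> X" "b \<in> X" for a b
  proof -
    have "dist a b < pi/2" using small that by auto
    then show ?thesis using pi_gt_zero by linarith
  qed
  have geo: "\<exists>g. geodesic_path X g a b" if "a \<in> X" "b \<in> X" for a b
    using cat sp[OF that] that unfolding CAT1_space_def pi_geodesic_def by blast
  define c where "c = dist p z"
  have c0: "0 \<le> c" "c < pi/2" using small pX zX by (auto simp: c_def)
  obtain g1 where g1: "geodesic_path X g1 p z"
    using geo pX zX by blast
  define m where "m = g1 (c/2)"
  have mX: "m \<in> X" using g1 c0 unfolding geodesic_path_def m_def c_def by auto
  define cc where "cc = cos (c/2)"
  have cc0: "cc > 0" unfolding cc_def using c0 by (intro cos_gt_zero_pi) auto
  have ccd: "cos c = 2 * cc\<^sup>2 - 1" unfolding cc_def using cos_double_cos[of "c/2"] by simp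
  show ?thesis
  proof (intro bexI[OF _ mX] ballI)
    fix x assume xX: "x \<in> X"
    define a where "a = dist x p"
    define b where "b = dist x z"
    have ab: "0 \<le> a" "a < pi/2" "0 \<le> b" "b < pi/2" using small xX pX zX by (auto simp: a_def b_def)
    obtain g2 where g2: "geodesic_path X g2 z x"
      using geo zX xX by blast
    obtain g3 where g3: "geodesic_path X g3 x p"
      using geo xX pX by blast
    have per: "dist p z + dist z x + dist x p < 2 * pi"
    proof -
      have "dist p z < pi/2" "dist z x < pi/2" "dist x p < pi/2" using small pX zX xX by auto
      then show ?thesis using pi_gt_zero by linarith
    qed
    have ci: "cat1_ineq p z x g1 g2 g3"
      using cat pX zX xX g1 g2 g3 per unfolding CAT1_space_def by blast
    have tri: "c \<le> a + b" "a \<le> b + c" "b \<le> a + c"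
      unfolding a_def b_def c_def by (metis dist_commute dist_triangle)+
    obtain x' p' z' :: "real^3" where t: "norm x' = 1" "norm p' = 1" "norm z' = 1"
      "x' \<bullet> p' = cos a" "x' \<bullet> z' = cos b" "p' \<bullet> z' = cos c"
      using sphere_triangle[of a b c] ab c0 tri by auto
    define m' where "m' = (1 / (2 * cc)) *\<^sub>R (p' + z')"
    have pp: "p' \<bullet> p' = 1" "z' \<bullet> z' = 1" "x' \<bullet> x' = 1"
      using t by (simp_all add: dot_square_norm)
    have mm: "m' \<bullet> m' = 1"
      unfolding m'_def using pp t(6) ccd cc0
      by (simp add: inner_add_left inner_add_right inner_commute power2_eq_square field_simps)
    have nm: "norm m' = 1" using mm by (simp add: norm_eq_sqrt_inner)
    have pm: "p' \<bullet> m' = cc" unfolding m'_def using pp t(6) ccd cc0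
      by (simp add: inner_add_left inner_add_right inner_commute power2_eq_square field_simps)
    have zm: "m' \<bullet> z' = cc" unfolding m'_def using pp t(6) ccd cc0
      by (simp add: inner_add_left inner_add_right inner_commute power2_eq_square field_simps)
    have tc: "p' \<bullet> x' = cos a" "z' \<bullet> x' = cos b" using t by (simp_all add: inner_commute)
    have xm: "m' \<bullet> x' = (cos a + cos b) / (2 * cc)" unfolding m'_def using tc
      by (simp add: inner_add_left add_divide_distrib)
    have aca: "arccos (cos a) = a" "arccos (cos b) = b" "arccos (cos c) = c"
      using ab c0 by (auto intro!: arccos_cos)
    have acc: "arccos cc = c/2" unfolding cc_def using c0 by (intro arccos_cos) auto
    have "dist (g1 (c/2)) (g3 0) \<le> sdist m' x'"
    proof (rule cat1_use[OF ci, of p' z' x'])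
      show "p' \<in> S2" "z' \<in> S2" "x' \<in> S2" "m' \<in> S2" "x' \<in> S2" using t nm by (auto simp: S2_def)
      show "sdist p' z' = dist p z" using t aca by (simp add: sdist_def c_def)
      show "sdist z' x' = dist z x" using tc aca by (simp add: sdist_def b_def dist_commute)
      show "sdist x' p' = dist x p" using t aca by (simp add: sdist_def a_def)
      show "c / 2 \<in> {0..dist p z}" using c0 by (simp add: c_def)
      show "0 \<in> {0..dist x p}" by simp
      show "sdist p' m' = c / 2" using pm acc by (simp add: sdist_def)
      show "sdist m' z' = dist p z - c / 2" using zm acc by (simp add: sdist_def c_def)
      show "sdist x' x' = 0" using pp by (simp add: sdist_def)
      show "sdist x' p' = dist x p - 0" using t aca by (simp add: sdist_def a_def)
    qed
    moreover have "g3 0 = x" using g3 by (simp add: geodesic_path_def)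
    ultimately have dle: "dist m x \<le> arccos ((cos a + cos b) / (2 * cc))"
      by (simp add: m_def sdist_def xm)
    have bnd: "\<bar>(cos a + cos b) / (2 * cc)\<bar> \<le> 1" using unit_inner_le[OF nm t(1)] xm by simp
    have bnd2: "-1 \<le> (cos a + cos b) / (2 * cc)" "(cos a + cos b) / (2 * cc) \<le> 1"
      using bnd by (simp_all only: abs_le_iff) linarith+
    have "cos (arccos ((cos a + cos b) / (2 * cc))) \<le> cos (dist m x)"
      using dle by (intro cos_monotone_0_pi_le arccos_ubound bnd2) auto
    then have "(cos a + cos b) / (2 * cc) \<le> cos (dist x m)"
      using bnd by (simp add: cos_arccos_abs dist_commute)
    then show "cos (dist x p) + cos (dist x z) \<le> 2 * cos (dist p z / 2) * cos (dist x m)"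
      using cc0 by (simp add: a_def b_def cc_def c_def field_simps)
  qed
qed




definition Gc :: "(nat \<Rightarrow> 'a::metric_space) \<Rightarrow> 'a \<Rightarrow> real" where
  "Gc y z = Gl (\<lambda>n. cos (dist (y n) z))"

locale setting =
  fixes X :: "'a::metric_space set" and k0 :: real
  assumes cat: "CAT1_space X" and cpl: "complete X"
    and small: "\<forall>a\<in>X. \<forall>b\<in>X. dist a b < pi/2"
    and k0: "k0 > 0" and k0b: "\<forall>a\<in>X. \<forall>b\<in>X. k0 \<le> cos (dist a b)"
begin

lemma Gc_bounds:
  assumes "\<And>n. y n \<in> X" "z \<in> X"
  shows "k0 \<le> Gc y z" "Gc y z \<le> 1"
  using Gl_eq[of k0 "\<lambda>n. cos (dist (y n) z)" 1] assms k0b unfolding Gc_def by auto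

lemma cos_half_pos: assumes "a \<in> X" "b \<in> X" shows "cos (dist a b / 2) > 0"
proof -
  have "dist a b < pi/2" using small assms by auto
  then show ?thesis using pi_gt_zero zero_le_dist[of a b] by (intro cos_gt_zero_pi) linarith+
qed

lemma Gc_mid:
  assumes y: "\<And>n. y n \<in> X" and pz: "p \<in> X" "z \<in> X"
  shows "\<exists>m\<in>X. Gc y p + Gc y z \<le> 2 * cos (dist p z / 2) * Gc y m"
proof -
  obtain m where mX: "m \<in> X" and
    H: "\<forall>x\<in>X. cos (dist x p) + cos (dist x z) \<le> 2 * cos (dist p z / 2) * cos (dist x m)"
    using midpoint[OF cat small pz] by blast
  define cc where "cc = cos (dist p z / 2)"
  have cc0: "cc > 0" unfolding cc_def using cos_half_pos pz by auto
  have "Gc y m \<ge> (1 / (2 * cc)) * (Gc y p + Gc y z)"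
    unfolding Gc_def
  proof (rule Gl_comb)
    fix n
    have "cos (dist (y n) p) + cos (dist (y n) z) \<le> 2 * cc * cos (dist (y n) m)"
      using H y[of n] by (simp add: cc_def)
    then show "1 / (2 * cc) * (cos (dist (y n) p) + cos (dist (y n) z)) \<le> cos (dist (y n) m)"
      using cc0 by (simp add: field_simps)
  qed (use cc0 in auto)
  then show ?thesis using mX cc0 by (auto simp: field_simps cc_def)
qed

lemma asym_center:
  assumes y: "\<And>n. y n \<in> X"
  shows "\<exists>A\<in>X. \<forall>z\<in>X. z \<noteq> A \<longrightarrow> Gc y z < Gc y A"
proof -
  have ne: "X \<noteq> {}" using y by blast
  define \<Gamma> where "\<Gamma> = Sup (Gc y ` X)"
  have bdd: "bdd_above (Gc y ` X)" using Gc_bounds[OF y] by (auto intro!: bdd_aboveI)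
  have up: "Gc y z \<le> \<Gamma>" if "z \<in> X" for z unfolding \<Gamma>_def using bdd that by (auto intro: cSup_upper)
  have gk: "k0 \<le> \<Gamma>" using up Gc_bounds(1)[OF y] ne by (meson equals0I order_trans)
  have apx: "\<exists>z\<in>X. \<Gamma> - e < Gc y z" if "e > 0" for e
  proof -
    have "\<Gamma> - e < Sup (Gc y ` X)" using that by (simp add: \<Gamma>_def)
    then show ?thesis using less_cSup_iff[of "Gc y ` X"] ne bdd by auto
  qed
  have "\<forall>k::nat. \<exists>z\<in>X. \<Gamma> - 1 / (real k + 1) < Gc y z" using apx by simp
  then obtain zs where zsX: "\<And>k. zs k \<in> X" and zsG: "\<And>k. \<Gamma> - 1 / (real k + 1) < Gc y (zs k)"
    by metis
  have cauchy: "Cauchy zs"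
  proof (rule metric_CauchyI)
    fix e :: real assume e: "e > 0"
    define e' where "e' = min e 1"
    have e': "0 < e'" "e' \<le> e" "e' \<le> 1" using e by (auto simp: e'_def)
    have pi1: "1 < pi" using pi_gt3 by linarith
    have ce: "cos (e'/2) < 1" using e' pi1 cos_mono_less_eq[of "e'/2" 0] by auto
    define \<eta> where "\<eta> = 2 * k0 * (1 - cos (e'/2))"
    have \<eta>: "\<eta> > 0" using ce k0 by (simp add: \<eta>_def)
    obtain N :: nat where N: "1 / (real N + 1) < \<eta> / 2"
    proof -
      obtain N :: nat where "inverse (real (Suc N)) < \<eta> / 2" using reals_Archimedean[of "\<eta>/2"] \<eta> by auto
      then show ?thesis using that[of N] by (simp add: inverse_eq_divide add.commute)
    qed
    show "\<exists>M. \<forall>m\<ge>M. \<forall>n\<ge>M. dist (zs m) (zs n) < e"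
    proof (intro exI allI impI)
      fix j k assume jk: "N \<le> j" "N \<le> k"
      have ij: "1 / (real j + 1) \<le> 1 / (real N + 1)" "1 / (real k + 1) \<le> 1 / (real N + 1)"
        using jk by (auto simp: field_simps)
      define c where "c = dist (zs j) (zs k)"
      obtain m where mX: "m \<in> X" and mG: "Gc y (zs j) + Gc y (zs k) \<le> 2 * cos (c / 2) * Gc y m"
        using Gc_mid[of y, OF y zsX zsX] unfolding c_def by blast
      have cc0: "cos (c/2) > 0" unfolding c_def using cos_half_pos zsX by auto
      have "2 * cos (c/2) * Gc y m \<le> 2 * cos (c/2) * \<Gamma>" using up[OF mX] cc0 by simp
      with mG zsG[of j] zsG[of k] ij N have "2 * \<Gamma> - \<eta> < 2 * cos (c/2) * \<Gamma>" by linarith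
      then have "1 - \<eta> / (2 * \<Gamma>) < cos (c/2)" using gk k0 by (simp add: field_simps)
      moreover have "\<eta> / (2 * \<Gamma>) \<le> \<eta> / (2 * k0)" using gk k0 \<eta> by (intro divide_left_mono) auto
      ultimately have "cos (e'/2) < cos (c/2)" using k0 by (simp add: \<eta>_def)
      moreover have "c < pi/2" "0 \<le> c" using small zsX by (auto simp: c_def)
      ultimately have "c/2 < e'/2"
        using cos_mono_less_eq[of "e'/2" "c/2"] e' pi1 by auto
      then show "dist (zs j) (zs k) < e" using e' by (simp add: c_def)
    qed
  qed
  obtain A where AX: "A \<in> X" and lim: "zs \<longlonglongrightarrow> A"
    using cpl zsX cauchy unfolding complete_def by blast
  have GA: "\<Gamma> \<le> Gc y A"
  proof (rule field_le_epsilon)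
    fix e :: real assume e: "e > 0"
    have "eventually (\<lambda>k. dist (zs k) A < e/2) sequentially"
      using lim e unfolding tendsto_iff by (meson half_gt_zero)
    moreover have "eventually (\<lambda>k::nat. 1 / (real k + 1) < e/2) sequentially"
    proof -
      obtain N :: nat where "inverse (real (Suc N)) < e / 2" using reals_Archimedean[of "e/2"] e by auto
      then have "1 / (real N + 1) < e/2" by (simp add: inverse_eq_divide add.commute)
      then show ?thesis unfolding eventually_sequentially
      proof (intro exI[of _ N] allI impI)
        fix n assume "N \<le> n" "1 / (real N + 1) < e/2"
        then have "1 / (real n + 1) \<le> 1 / (real N + 1)" by (simp add: frac_le)
        then show "1 / (real n + 1) < e/2" using \<open>1 / (real N + 1) < e/2\<close> by linarith
      qed
    qed
    ultimately have "eventually (\<lambda>k. dist (zs k) A < e/2 \<and> 1 / (real k + 1) < e/2) sequentially"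
      by (rule eventually_conj)
    then obtain N where "\<forall>k\<ge>N. dist (zs k) A < e/2 \<and> 1 / (real k + 1) < e/2"
      unfolding eventually_sequentially by blast
    then obtain k where k: "dist (zs k) A < e/2" "1 / (real k + 1) < e/2" by blast
    have "Gc y A \<ge> Gc y (zs k) - dist (zs k) A"
      unfolding Gc_def
    proof (rule Gl_lip)
      fix n
      have "\<bar>cos (dist (y n) A) - cos (dist (y n) (zs k))\<bar> \<le> \<bar>dist (y n) A - dist (y n) (zs k)\<bar>"
        by (rule cos_lip)
      also have "\<dots> \<le> dist (zs k) A"
      proof -
        have "dist (y n) A \<le> dist (y n) (zs k) + dist (zs k) A" by (rule dist_triangle)
        moreover have "dist (y n) (zs k) \<le> dist (y n) A + dist A (zs k)" by (rule dist_triangle)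
        moreover have "dist A (zs k) = dist (zs k) A" by (rule dist_commute)
        ultimately show ?thesis by linarith
      qed
      finally show "cos (dist (y n) (zs k)) - dist (zs k) A \<le> cos (dist (y n) A)" by linarith
    qed auto
    then show "\<Gamma> \<le> Gc y A + e" using zsG[of k] k by linarith
  qed
  show ?thesis
  proof (intro bexI[OF _ AX] ballI impI)
    fix z assume zX: "z \<in> X" and zA: "z \<noteq> A"
    show "Gc y z < Gc y A"
    proof (rule ccontr)
      assume "\<not> ?thesis"
      then have gz: "\<Gamma> \<le> Gc y z" using GA by linarith
      define c where "c = dist A z"
      have c: "0 < c" "c < pi/2" using zA small AX zX by (auto simp: c_def)
      obtain m where mX: "m \<in> X" and mG: "Gc y A + Gc y z \<le> 2 * cos (c / 2) * Gc y m"
        using Gc_mid[of y, OF y AX zX] unfolding c_def by blast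
      have cc0: "cos (c/2) > 0" using c by (intro cos_gt_zero_pi) auto
      have cc1: "cos (c/2) < 1" using c cos_mono_less_eq[of "c/2" 0] by auto
      have "2 * \<Gamma> \<le> 2 * cos (c/2) * Gc y m" using mG GA gz by linarith
      also have "\<dots> \<le> 2 * cos (c/2) * \<Gamma>" using up[OF mX] cc0 by simp
      also have "\<dots> < 2 * \<Gamma>" using cc1 gk k0 by simp
      finally show False by simp
    qed
  qed
qed

end



lemma rec_liminf:
  fixes u v :: "nat \<Rightarrow> real"
  assumes bu: "\<And>n. \<bar>u n\<bar> \<le> 1" and bv: "\<And>n. \<bar>v n\<bar> \<le> 1"
    and d: "0 < \<delta>" "\<delta> \<le> 1"
    and rec: "\<And>n. \<exists>l. \<delta> \<le> l \<and> l \<le> 1 \<and> u (Suc n) \<ge> l * v (Suc n) + (1 - l) * u n"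
  shows "Gl v \<le> Gl u"
proof (rule Gl_ge[of "-1" u 1])
  fix s assume s: "s < Gl v"
  define t where "t = (s + Gl v) / 2"
  have "eventually (\<lambda>n. t < v n) sequentially"
    by (rule Gl_ev[of "-1" _ 1]) (use bv s in \<open>auto simp: t_def abs_le_iff\<close>)
  then obtain N where N: "\<And>n. n \<ge> N \<Longrightarrow> t < v n" unfolding eventually_sequentially by blast
  define M where "M = \<bar>u N - t\<bar>"
  have step: "u (Suc n) - t \<ge> min 0 ((1 - \<delta>) * (u n - t))" if "n \<ge> N" for n
  proof -
    obtain l where l: "\<delta> \<le> l" "l \<le> 1" "u (Suc n) \<ge> l * v (Suc n) + (1 - l) * u n" using rec by blast
    have vt: "t < v (Suc n)" using N that by simp
    have "u (Suc n) - t \<ge> l * (v (Suc n) - t) + (1 - l) * (u n - t)" using l(3) by (simp add: algebra_simps)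
    moreover have "l * (v (Suc n) - t) \<ge> 0" using l vt d by simp
    ultimately have a: "u (Suc n) - t \<ge> (1 - l) * (u n - t)" by linarith
    show ?thesis
    proof (cases "u n - t \<ge> 0")
      case True
      then have "(1 - l) * (u n - t) \<ge> 0" using l by simp
      then show ?thesis using a by linarith
    next
      case False
      then have "(1 - l) * (u n - t) \<ge> (1 - \<delta>) * (u n - t)" using l by (intro mult_right_mono_neg) auto
      then show ?thesis using a by linarith
    qed
  qed
  have ind: "u (N + k) - t \<ge> - ((1 - \<delta>) ^ k * M)" for k
  proof (induction k)
    case 0 then show ?case by (simp add: M_def)
  next
    case (Suc k)
    have "u (N + Suc k) - t \<ge> min 0 ((1 - \<delta>) * (u (N + k) - t))" using step[of "N + k"] by simp
    moreover have "(1 - \<delta>) * (u (N + k) - t) \<ge> (1 - \<delta>) * (- ((1 - \<delta>) ^ k * M))"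
      using Suc d by (intro mult_left_mono) auto
    moreover have "0 \<ge> - ((1 - \<delta>) ^ Suc k * M)" using d by (simp add: M_def)
    ultimately show ?case by (simp add: min_def split: if_splits)
  qed
  have "(\<lambda>k. (1 - \<delta>) ^ k * M) \<longlonglongrightarrow> 0 * M"
    using d by (intro tendsto_mult LIMSEQ_power_zero tendsto_const) auto
  then have "eventually (\<lambda>k. (1 - \<delta>) ^ k * M < t - s) sequentially"
    using s by (intro order_tendstoD) (auto simp: t_def)
  then obtain K where K: "\<And>k. k \<ge> K \<Longrightarrow> (1 - \<delta>) ^ k * M < t - s" unfolding eventually_sequentially by blast
  show "eventually (\<lambda>n. s < u n) sequentially"
    unfolding eventually_sequentially
  proof (intro exI[of _ "N + K"] allI impI)
    fix n assume n: "N + K \<le> n"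
    define k where "k = n - N"
    have k: "n = N + k" "k \<ge> K" using n by (auto simp: k_def)
    show "s < u n" using ind[of k] K[OF k(2)] k(1) by simp
  qed
qed (use bu in \<open>auto simp: abs_le_iff\<close>)

lemma demi_liminf:
  fixes u v :: "nat \<Rightarrow> real" and r :: "nat \<Rightarrow> nat"
  assumes bu: "\<And>n. \<bar>u n\<bar> \<le> 1" and bv: "\<And>n. \<bar>v n\<bar> \<le> 1"
    and d: "0 < \<delta>" "\<delta> \<le> 1"
    and rec: "\<And>n. \<exists>l. \<delta> \<le> l \<and> l \<le> 1 \<and> u (Suc n) \<ge> l * v (Suc n) + (1 - l) * u n"
    and reg: "\<And>e. e > 0 \<Longrightarrow> eventually (\<lambda>n. \<bar>u (Suc n) - u n\<bar> < e) sequentially"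
    and r: "strict_mono r"
  shows "Gl (\<lambda>i. v (r i)) \<le> Gl (\<lambda>i. u (r i))"
proof (rule Gl_ge[of "-1" _ 1])
  fix s assume s: "s < Gl (\<lambda>i. v (r i))"
  define e where "e = (Gl (\<lambda>i. v (r i)) - s) / 2"
  have e: "e > 0" using s by (simp add: e_def)
  have pw: "u (Suc n) \<ge> v (Suc n) - \<bar>u (Suc n) - u n\<bar> / \<delta>" for n
  proof -
    obtain l where l: "\<delta> \<le> l" "l \<le> 1" "u (Suc n) \<ge> l * v (Suc n) + (1 - l) * u n" using rec by blast
    have "l * (u (Suc n) - v (Suc n)) \<ge> (1 - l) * (u n - u (Suc n))" using l(3) by (simp add: algebra_simps)
    moreover have "(1 - l) * (u n - u (Suc n)) \<ge> - \<bar>u (Suc n) - u n\<bar>"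
    proof -
      have "(1 - l) * \<bar>u (Suc n) - u n\<bar> \<le> \<bar>u (Suc n) - u n\<bar>" using l d by (simp add: mult_left_le_one_le)
      moreover have "(1 - l) * (u n - u (Suc n)) \<ge> - ((1 - l) * \<bar>u (Suc n) - u n\<bar>)"
      proof -
        have "0 \<le> (1 - l) * (\<bar>u (Suc n) - u n\<bar> + (u n - u (Suc n)))" using l by (intro mult_nonneg_nonneg) auto
        then have "0 \<le> (1 - l) * \<bar>u (Suc n) - u n\<bar> + (1 - l) * (u n - u (Suc n))" by (simp only: distrib_left)
        then show ?thesis by linarith
      qed
      ultimately show ?thesis by linarith
    qed
    ultimately have "l * (u (Suc n) - v (Suc n)) \<ge> - \<bar>u (Suc n) - u n\<bar>" by linarith
    then have "u (Suc n) - v (Suc n) \<ge> - \<bar>u (Suc n) - u n\<bar> / l" using l d by (simp add: field_simps)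
    moreover have "\<bar>u (Suc n) - u n\<bar> / l \<le> \<bar>u (Suc n) - u n\<bar> / \<delta>" using l d by (intro divide_left_mono) auto
    ultimately show ?thesis by linarith
  qed
  have se: "s + e < Gl (\<lambda>i. v (r i))" using s unfolding e_def by (simp add: field_simps)
  have ev1: "eventually (\<lambda>i. s + e < v (r i)) sequentially"
    by (rule Gl_ev[of "-1" _ 1 "s + e"]) (use bv se in \<open>auto simp: abs_le_iff\<close>)
  have "eventually (\<lambda>n. \<bar>u (Suc n) - u n\<bar> < e * \<delta>) sequentially" using reg e d by simp
  then have "eventually (\<lambda>m. \<bar>u m - u (m - 1)\<bar> < e * \<delta> \<and> m \<ge> 1) sequentially"
  proof -
    assume "eventually (\<lambda>n. \<bar>u (Suc n) - u n\<bar> < e * \<delta>) sequentially"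
    then obtain N where N: "\<And>n. n \<ge> N \<Longrightarrow> \<bar>u (Suc n) - u n\<bar> < e * \<delta>"
      unfolding eventually_sequentially by blast
    show ?thesis unfolding eventually_sequentially
    proof (intro exI[of _ "Suc N"] allI impI)
      fix m assume m: "Suc N \<le> m"
      then obtain n where n: "m = Suc n" "n \<ge> N" by (cases m) auto
      show "\<bar>u m - u (m - 1)\<bar> < e * \<delta> \<and> m \<ge> 1" using N[OF n(2)] n by simp
    qed
  qed
  then have ev2: "eventually (\<lambda>i. \<bar>u (r i) - u (r i - 1)\<bar> < e * \<delta> \<and> r i \<ge> 1) sequentially"
    by (rule eventually_compose_filterlim[OF _ filterlim_subseq[OF r]])
  show "eventually (\<lambda>i. s < u (r i)) sequentially"
    using ev1 ev2
  proof eventually_elim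
    case (elim i)
    define n where "n = r i - 1"
    have n: "r i = Suc n" using elim by (simp add: n_def)
    have "u (Suc n) \<ge> v (Suc n) - \<bar>u (Suc n) - u n\<bar> / \<delta>" by (rule pw)
    moreover have "\<bar>u (Suc n) - u n\<bar> / \<delta> < e" using elim n d by (simp add: field_simps)
    ultimately show ?case using elim n by simp
  qed
qed (use bu in \<open>auto simp: abs_le_iff\<close>)




locale fv = setting +
  fixes T :: "'a::metric_space \<Rightarrow> 'a"
  assumes TX: "\<forall>x\<in>X. T x \<in> X" and fvT: "firmly_vicinal X T"
begin

lemma cosX: "a \<in> X \<Longrightarrow> b \<in> X \<Longrightarrow> k0 \<le> cos (dist a b) \<and> cos (dist a b) \<le> 1"
  using k0b by auto

lemma k0_le1: "a \<in> X \<Longrightarrow> k0 \<le> 1"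
  using cosX[of a a] by simp

lemma FV1:
  assumes x: "x \<in> X" and p: "p \<in> X" and Tp: "T p = p"
  shows "cos (dist x p) \<le> cos (dist (T x) x) * cos (dist (T x) p)"
proof -
  define Cx where "Cx = cos (dist (T x) x)"
  define K where "K = cos (dist (T x) p)"
  have H: "(Cx\<^sup>2 * (1 + 1\<^sup>2) * 1 + 1\<^sup>2 * (1 + Cx\<^sup>2) * Cx) * K
       \<ge> Cx\<^sup>2 * (1 + 1\<^sup>2) * K + 1\<^sup>2 * (1 + Cx\<^sup>2) * cos (dist x p)"
  proof -
    note H0 = bspec[OF bspec[OF fvT[unfolded firmly_vicinal_def] x] p]
    have "cos (dist (T p) x) = cos (dist x p)" using Tp by (simp add: dist_commute)
    with H0 show ?thesis unfolding Let_def Tp dist_self cos_zero Cx_def[symmetric] K_def[symmetric]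
      by simp
  qed
  then have "(1 + Cx\<^sup>2) * cos (dist x p) \<le> (1 + Cx\<^sup>2) * (Cx * K)" by (simp add: algebra_simps)
  moreover have "1 + Cx\<^sup>2 > 0" by (simp add: add_pos_nonneg)
  ultimately show ?thesis unfolding Cx_def K_def by simp
qed

lemma FV2:
  assumes x: "x \<in> X" and z: "z \<in> X"
  shows "\<exists>l. k0\<^sup>2 / 4 \<le> l \<and> l \<le> 1 \<and>
    cos (dist (T x) (T z)) \<ge> l * cos (dist (T x) z) + (1 - l) * cos (dist x (T z))"
proof -
  define Cx where "Cx = cos (dist (T x) x)"
  define Cy where "Cy = cos (dist (T z) z)"
  define K where "K = cos (dist (T x) (T z))"
  define A where "A = cos (dist (T x) z)"
  define B where "B = cos (dist x (T z))"
  define a where "a = Cx\<^sup>2 * (1 + Cy\<^sup>2)"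
  define b where "b = Cy\<^sup>2 * (1 + Cx\<^sup>2)"
  have Tx: "T x \<in> X" and Tz: "T z \<in> X" using TX x z by auto
  have cx: "k0 \<le> Cx" "Cx \<le> 1" using cosX[OF Tx x] by (auto simp: Cx_def)
  have cy: "k0 \<le> Cy" "Cy \<le> 1" using cosX[OF Tz z] by (auto simp: Cy_def)
  have kk: "k0 \<le> K" using cosX[OF Tx Tz] by (auto simp: K_def)
  have H: "(a * Cy + b * Cx) * K \<ge> a * A + b * B"
  proof -
    note H0 = bspec[OF bspec[OF fvT[unfolded firmly_vicinal_def] x] z]
    have "cos (dist (T z) x) = B" by (simp add: B_def dist_commute)
    with H0 show ?thesis unfolding Let_def Cx_def[symmetric] Cy_def[symmetric] K_def[symmetric] A_def[symmetric]
      a_def b_def by (simp add: algebra_simps)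
  qed
  have a0: "a \<ge> k0\<^sup>2"
  proof -
    have "k0\<^sup>2 \<le> Cx\<^sup>2" using cx k0 by (intro power_mono) auto
    also have "\<dots> \<le> Cx\<^sup>2 * (1 + Cy\<^sup>2)" by (simp add: mult_le_cancel_left1)
    finally show ?thesis by (simp add: a_def)
  qed
  have b0: "b \<ge> 0" by (simp add: b_def)
  have Cx2: "Cx\<^sup>2 \<le> 1" "Cy\<^sup>2 \<le> 1" using cx cy k0 by (simp_all add: abs_square_le_1)
  have ab4: "a + b \<le> 4"
  proof -
    have "a \<le> 1 * 2" unfolding a_def using Cx2 by (intro mult_mono) auto
    moreover have "b \<le> 1 * 2" unfolding b_def using Cx2 by (intro mult_mono) auto
    ultimately show ?thesis by simp
  qed
  have apos: "a > 0" using a0 k0 by (smt (verit) zero_less_power)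
  have K0: "K > 0" using kk k0 by simp
  have "(a * Cy + b * Cx) * K \<le> (a + b) * K"
  proof -
    have "a * Cy \<le> a" using cy apos by (simp add: mult_left_le)
    moreover have "b * Cx \<le> b" using cx b0 by (simp add: mult_left_le)
    ultimately show ?thesis using K0 by (intro mult_right_mono) auto
  qed
  with H have H2: "(a + b) * K \<ge> a * A + b * B" by linarith
  define l where "l = a / (a + b)"
  have abp: "a + b > 0" using apos b0 by simp
  have l1: "l \<le> 1" using b0 abp by (simp add: l_def)
  have l0: "k0\<^sup>2 / 4 \<le> l"
  proof -
    have "k0\<^sup>2 / 4 \<le> a / 4" using a0 by simp
    also have "\<dots> \<le> a / (a + b)" using ab4 abp apos by (intro divide_left_mono) auto
    finally show ?thesis by (simp add: l_def)
  qed
  have e1: "(a + b) * l = a" using abp by (simp add: l_def)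
  have e2: "(a + b) * (1 - l) = b" using abp e1 by (simp add: right_diff_distrib)
  have "(a + b) * (l * A + (1 - l) * B) = ((a + b) * l) * A + ((a + b) * (1 - l)) * B"
    by (simp add: algebra_simps)
  also have "\<dots> = a * A + b * B" using e1 e2 by simp
  finally have "(a + b) * (l * A + (1 - l) * B) \<le> (a + b) * K" using H2 by simp
  then have "l * A + (1 - l) * B \<le> K" using abp by simp
  then show ?thesis using l0 l1 unfolding K_def A_def B_def by blast
qed

end



lemma Gl_lim: assumes "w \<longlonglongrightarrow> W" shows "Gl w = W"
proof -
  have "liminf (\<lambda>n. ereal (w n)) = ereal W"
    by (rule lim_imp_Liminf) (use assms in auto)
  then show ?thesis by (simp add: Gl_def)
qed

context fv begin

lemma orbit: "x0 \<in> X \<Longrightarrow> (T ^^ n) x0 \<in> X"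
  by (induction n) (auto simp: TX)

lemma delta_pos: "a \<in> X \<Longrightarrow> 0 < k0\<^sup>2 / 4 \<and> k0\<^sup>2 / 4 \<le> 1"
proof -
  assume "a \<in> X"
  then have "k0 \<le> 1" by (rule k0_le1)
  then have "k0\<^sup>2 \<le> 1" using k0 by (simp add: abs_square_le_1)
  then show ?thesis using k0 by simp
qed

lemma rec_orbit:
  assumes x0: "x0 \<in> X" and q: "q \<in> X"
  shows "\<exists>l. k0\<^sup>2/4 \<le> l \<and> l \<le> 1 \<and>
     cos (dist ((T ^^ Suc n) x0) (T q)) \<ge> l * cos (dist ((T ^^ Suc n) x0) q) + (1 - l) * cos (dist ((T ^^ n) x0) (T q))"
  using FV2[OF orbit[OF x0, of n] q] by simp

lemma orbit_center_fixed:
  assumes x0: "x0 \<in> X" and A: "A \<in> X" and cen: "\<forall>z\<in>X. z \<noteq> A \<longrightarrow> Gc (\<lambda>n. (T ^^ n) x0) z < Gc (\<lambda>n. (T ^^ n) x0) A"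
  shows "T A = A"
proof (rule ccontr)
  assume ne: "T A \<noteq> A"
  have "Gc (\<lambda>n. (T ^^ n) x0) A \<le> Gc (\<lambda>n. (T ^^ n) x0) (T A)"
    unfolding Gc_def
    by (rule rec_liminf[of _ _ "k0\<^sup>2/4"]) (use delta_pos[OF x0] rec_orbit[OF x0 A] in auto)
  moreover have "T A \<in> X" using TX A by auto
  ultimately show False using cen ne by force
qed

lemma fejer:
  assumes x0: "x0 \<in> X" and p: "p \<in> X" and Tp: "T p = p"
  shows "cos (dist ((T ^^ n) x0) p) \<le> cos (dist ((T ^^ Suc n) x0) ((T ^^ n) x0)) * cos (dist ((T ^^ Suc n) x0) p)"
    "cos (dist ((T ^^ n) x0) p) \<le> cos (dist ((T ^^ Suc n) x0) p)"
proof -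
  show a: "cos (dist ((T ^^ n) x0) p) \<le> cos (dist ((T ^^ Suc n) x0) ((T ^^ n) x0)) * cos (dist ((T ^^ Suc n) x0) p)"
    using FV1[OF orbit[OF x0, of n] p Tp] by simp
  have "cos (dist ((T ^^ Suc n) x0) ((T ^^ n) x0)) \<le> 1" by simp
  moreover have "0 \<le> cos (dist ((T ^^ Suc n) x0) p)" using cosX[OF orbit[OF x0, of "Suc n"] p] k0 by linarith
  ultimately have "cos (dist ((T ^^ Suc n) x0) ((T ^^ n) x0)) * cos (dist ((T ^^ Suc n) x0) p) \<le> cos (dist ((T ^^ Suc n) x0) p)"
    using mult_right_mono[of "cos (dist ((T ^^ Suc n) x0) ((T ^^ n) x0))" 1 "cos (dist ((T ^^ Suc n) x0) p)"] by simp
  with a show "cos (dist ((T ^^ n) x0) p) \<le> cos (dist ((T ^^ Suc n) x0) p)" by linarith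
qed

lemma fejer_conv:
  assumes x0: "x0 \<in> X" and p: "p \<in> X" and Tp: "T p = p"
  obtains W where "(\<lambda>n. cos (dist ((T ^^ n) x0) p)) \<longlonglongrightarrow> W" "W \<ge> k0"
proof -
  have inc: "incseq (\<lambda>n. cos (dist ((T ^^ n) x0) p))"
    by (rule incseq_SucI) (use fejer(2)[OF x0 p Tp] in auto)
  obtain W where W: "(\<lambda>n. cos (dist ((T ^^ n) x0) p)) \<longlonglongrightarrow> W" "\<forall>i. cos (dist ((T ^^ i) x0) p) \<le> W"
    using incseq_convergent[OF inc, of 1] by auto
  have "k0 \<le> W" using W(2) cosX[OF orbit[OF x0, of 0] p] by (meson order_trans)
  then show ?thesis using W that by blast
qed

lemma regular:
  assumes x0: "x0 \<in> X" and p: "p \<in> X" and Tp: "T p = p" and e: "e > 0"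
  shows "eventually (\<lambda>n. dist ((T ^^ Suc n) x0) ((T ^^ n) x0) < e) sequentially"
proof -
  define w where "w n = cos (dist ((T ^^ n) x0) p)" for n
  obtain W where W: "w \<longlonglongrightarrow> W" "W \<ge> k0" using fejer_conv[OF x0 p Tp] unfolding w_def by blast
  have "(\<lambda>n. w n / w (Suc n)) \<longlonglongrightarrow> W / W"
    using W k0 by (intro tendsto_divide W(1) LIMSEQ_Suc) auto
  then have lim1: "(\<lambda>n. w n / w (Suc n)) \<longlonglongrightarrow> 1" using W k0 by simp
  define e' where "e' = min e 1"
  have e': "0 < e'" "e' \<le> e" "e' < pi" using e pi_gt3 by (auto simp: e'_def)
  have ce: "cos e' < 1" using e' cos_mono_less_eq[of e' 0] by auto
  have ev: "eventually (\<lambda>n. cos e' < w n / w (Suc n)) sequentially"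
    using lim1 ce by (rule order_tendstoD)
  show ?thesis using ev
  proof (rule eventually_mono)
    fix n assume n: "cos e' < w n / w (Suc n)"
    have wpos: "w (Suc n) > 0" using cosX[OF orbit[OF x0, of "Suc n"] p] k0 unfolding w_def by linarith
    have "w n / w (Suc n) \<le> cos (dist ((T ^^ Suc n) x0) ((T ^^ n) x0))"
      using fejer(1)[OF x0 p Tp, of n] wpos by (simp add: w_def divide_le_eq)
    with n have "cos e' < cos (dist ((T ^^ Suc n) x0) ((T ^^ n) x0))" by linarith
    moreover have "dist ((T ^^ Suc n) x0) ((T ^^ n) x0) < pi/2" using small orbit[OF x0] by blast
    ultimately have "dist ((T ^^ Suc n) x0) ((T ^^ n) x0) < e'"
      using cos_mono_less_eq[of e' "dist ((T ^^ Suc n) x0) ((T ^^ n) x0)"] e' by auto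
    then show "dist ((T ^^ Suc n) x0) ((T ^^ n) x0) < e" using e' by linarith
  qed
qed

lemma demiclosed:
  assumes x0: "x0 \<in> X" and p: "p \<in> X" and Tp: "T p = p" and r: "strict_mono r"
    and q: "q \<in> X" and cen: "\<forall>z\<in>X. z \<noteq> q \<longrightarrow> Gc (\<lambda>i. (T ^^ r i) x0) z < Gc (\<lambda>i. (T ^^ r i) x0) q"
  shows "T q = q"
proof (rule ccontr)
  assume ne: "T q \<noteq> q"
  have "Gc (\<lambda>i. (T ^^ r i) x0) q \<le> Gc (\<lambda>i. (T ^^ r i) x0) (T q)"
    unfolding Gc_def
  proof (rule demi_liminf[of "\<lambda>n. cos (dist ((T ^^ n) x0) (T q))" "\<lambda>n. cos (dist ((T ^^ n) x0) q)" "k0\<^sup>2/4" r])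
    fix e :: real assume e: "e > 0"
    show "eventually (\<lambda>n. \<bar>cos (dist ((T ^^ Suc n) x0) (T q)) - cos (dist ((T ^^ n) x0) (T q))\<bar> < e) sequentially"
      using regular[OF x0 p Tp e]
    proof (rule eventually_mono)
      fix n assume n: "dist ((T ^^ Suc n) x0) ((T ^^ n) x0) < e"
      have "\<bar>cos (dist ((T ^^ Suc n) x0) (T q)) - cos (dist ((T ^^ n) x0) (T q))\<bar>
          \<le> \<bar>dist ((T ^^ Suc n) x0) (T q) - dist ((T ^^ n) x0) (T q)\<bar>" by (rule cos_lip)
      also have "\<dots> \<le> dist ((T ^^ Suc n) x0) ((T ^^ n) x0)"
      proof -
        have "dist ((T ^^ Suc n) x0) (T q) \<le> dist ((T ^^ Suc n) x0) ((T ^^ n) x0) + dist ((T ^^ n) x0) (T q)"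
          by (rule dist_triangle)
        moreover have "dist ((T ^^ n) x0) (T q) \<le> dist ((T ^^ n) x0) ((T ^^ Suc n) x0) + dist ((T ^^ Suc n) x0) (T q)"
          by (rule dist_triangle)
        moreover have "dist ((T ^^ n) x0) ((T ^^ Suc n) x0) = dist ((T ^^ Suc n) x0) ((T ^^ n) x0)"
          by (rule dist_commute)
        ultimately show ?thesis by linarith
      qed
      finally show "\<bar>cos (dist ((T ^^ Suc n) x0) (T q)) - cos (dist ((T ^^ n) x0) (T q))\<bar> < e"
        using n by linarith
    qed
  qed (use delta_pos[OF x0] rec_orbit[OF x0 q] r in auto)
  moreover have "T q \<in> X" using TX q by auto
  ultimately show False using cen ne by force
qed

lemma conv_limsup:
  assumes y: "\<And>n. y n \<in> X" and z: "z \<in> X" and z': "z' \<in> X" and lt: "Gc y z < Gc y z'"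
  shows "limsup (\<lambda>i. ereal (dist (y i) z')) < limsup (\<lambda>i. ereal (dist (y i) z))"
proof -
  have bz: "k0 \<le> Gc y z" "Gc y z' \<le> 1" using Gc_bounds[OF y z] Gc_bounds[OF y z'] by auto
  define t1 where "t1 = Gc y z + (Gc y z' - Gc y z) / 3"
  define t2 where "t2 = Gc y z + 2 * (Gc y z' - Gc y z) / 3"
  have t: "Gc y z < t1" "t1 < t2" "t2 < Gc y z'" using lt by (simp_all add: t1_def t2_def field_simps)
  have t1b: "-1 \<le> t1" using t bz k0 by linarith
  have t2b: "t2 \<le> 1" using t bz by linarith
  have ev: "eventually (\<lambda>i. t2 < cos (dist (y i) z')) sequentially"
  proof -
    have t': "t2 < Gl (\<lambda>n. cos (dist (y n) z'))" using t(3) by (simp add: Gc_def)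
    show ?thesis by (rule Gl_ev[of "-1" _ 1, OF _ _ t']) auto
  qed
  have up: "limsup (\<lambda>i. ereal (dist (y i) z')) \<le> ereal (arccos t2)"
  proof (rule Limsup_bounded)
    show "eventually (\<lambda>i. ereal (dist (y i) z') \<le> ereal (arccos t2)) sequentially"
      using ev
    proof (rule eventually_mono)
      fix i assume i: "t2 < cos (dist (y i) z')"
      have "cos (arccos t2) < cos (dist (y i) z')" using i t1b t t2b by (simp add: cos_arccos)
      moreover have "dist (y i) z' < pi/2" using small y z' by blast
      moreover have "0 \<le> arccos t2" "arccos t2 \<le> pi" using t1b t t2b
        by (intro arccos_lbound arccos_ubound; linarith)+
      moreover have "0 \<le> dist (y i) z'" by simp
      ultimately have "dist (y i) z' < arccos t2"
        using cos_mono_less_eq[of "arccos t2" "dist (y i) z'"] by linarith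
      then show "ereal (dist (y i) z') \<le> ereal (arccos t2)" by simp
    qed
  qed
  have fr: "frequently (\<lambda>i. cos (dist (y i) z) < t1) sequentially"
  proof -
    have t': "Gl (\<lambda>n. cos (dist (y n) z)) < t1" using t(1) by (simp add: Gc_def)
    show ?thesis by (rule Gl_freq[of "-1" _ 1, OF _ _ t']) auto
  qed
  have lo: "ereal (arccos t1) \<le> limsup (\<lambda>i. ereal (dist (y i) z))"
  proof (rule ccontr)
    assume "\<not> ?thesis"
    then have "limsup (\<lambda>i. ereal (dist (y i) z)) < ereal (arccos t1)" by simp
    from Limsup_lessD[OF this] have "eventually (\<lambda>i. dist (y i) z < arccos t1) sequentially" by simp
    moreover have "eventually (\<lambda>i. \<not> cos (dist (y i) z) < t1) sequentially"
    proof (rule eventually_mono[OF calculation])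
      fix i assume "dist (y i) z < arccos t1"
      moreover have "0 \<le> dist (y i) z" by simp
      moreover have "arccos t1 \<le> pi" using t1b t t2b by (intro arccos_ubound) auto
      moreover have "0 \<le> arccos t1" using t1b t t2b by (intro arccos_lbound) linarith+
      ultimately have "cos (arccos t1) < cos (dist (y i) z)"
        using cos_mono_less_eq[of "arccos t1" "dist (y i) z"] by linarith
      then show "\<not> cos (dist (y i) z) < t1" using t1b t t2b by (simp add: cos_arccos)
    qed
    with fr show False by (simp add: frequently_def)
  qed
  have "arccos t2 < arccos t1" using t1b t t2b by (intro arccos_less_arccos) auto
  then have "ereal (arccos t2) < ereal (arccos t1)" by simp
  then show ?thesis using up lo by (blast intro: le_less_trans less_le_trans)
qed

lemma main:
  assumes x0: "x0 \<in> X"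
  shows "\<exists>p\<in>{z\<in>X. T z = z}. Delta_convergent X (\<lambda>n. (T ^^ n) x0) p"
proof -
  obtain p where pX: "p \<in> X" and cenp: "\<forall>z\<in>X. z \<noteq> p \<longrightarrow> Gc (\<lambda>n. (T ^^ n) x0) z < Gc (\<lambda>n. (T ^^ n) x0) p"
    using asym_center[of "\<lambda>n. (T ^^ n) x0"] orbit[OF x0] by blast
  have Tp: "T p = p" by (rule orbit_center_fixed[OF x0 pX cenp])
  have sub: "Gc (\<lambda>i. (T ^^ r i) x0) f = Gc (\<lambda>n. (T ^^ n) x0) f"
    if r: "strict_mono r" and f: "f \<in> X" "T f = f" for r f
  proof -
    obtain W where W: "(\<lambda>n. cos (dist ((T ^^ n) x0) f)) \<longlonglongrightarrow> W" using fejer_conv[OF x0 f] by blast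
    have "(\<lambda>i. cos (dist ((T ^^ r i) x0) f)) \<longlonglongrightarrow> W"
      using LIMSEQ_subseq_LIMSEQ[OF W r] by (simp add: comp_def)
    then show ?thesis using W unfolding Gc_def by (simp add: Gl_lim)
  qed
  have "Delta_convergent X (\<lambda>n. (T ^^ n) x0) p"
    unfolding Delta_convergent_def
  proof (intro conjI pX allI impI ballI)
    fix r :: "nat \<Rightarrow> nat" and z assume r: "strict_mono r" and zX: "z \<in> X" and zp: "z \<noteq> p"
    define y where "y = (\<lambda>i. (T ^^ r i) x0)"
    have yX: "\<And>i. y i \<in> X" using orbit[OF x0] by (simp add: y_def)
    obtain q where qX: "q \<in> X" and cenq: "\<forall>z\<in>X. z \<noteq> q \<longrightarrow> Gc y z < Gc y q"
      using asym_center[of y, OF yX] by blast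
    have Tq: "T q = q" using demiclosed[OF x0 pX Tp r qX] cenq unfolding y_def by simp
    have qp: "q = p"
    proof (rule ccontr)
      assume "q \<noteq> p"
      then have "Gc y p < Gc y q" "Gc (\<lambda>n. (T ^^ n) x0) q < Gc (\<lambda>n. (T ^^ n) x0) p"
        using cenq cenp pX qX by auto
      moreover have "Gc y p = Gc (\<lambda>n. (T ^^ n) x0) p" "Gc y q = Gc (\<lambda>n. (T ^^ n) x0) q"
        using sub[OF r pX Tp] sub[OF r qX Tq] by (simp_all add: y_def)
      ultimately show False by linarith
    qed
    have "Gc y z < Gc y p" using cenq qp zX zp by auto
    from conv_limsup[OF yX zX pX this]
    show "limsup (\<lambda>i. ereal (dist ((T ^^ r i) x0) p)) < limsup (\<lambda>i. ereal (dist ((T ^^ r i) x0) z))"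
      by (simp add: y_def)
  qed
  then show ?thesis using pX Tp by blast
qed

end


theorem corollary4p7:
  fixes X :: "'a::metric_space set" and T :: "'a \<Rightarrow> 'a"
  assumes "CAT1_space X" and "complete X"
    and "bounded X" and "diameter X < pi / 2"
    and "\<forall>x\<in>X. T x \<in> X"
    and "firmly_vicinal X T"
  shows "\<forall>x\<in>X. \<exists>p\<in>{z\<in>X. T z = z}. Delta_convergent X (\<lambda>n. (T ^^ n) x) p"
proof
  fix x assume xX: "x \<in> X"
  define D where "D = diameter X"
  have dle: "dist a b \<le> D" if "a \<in> X" "b \<in> X" for a b
    unfolding D_def by (rule diameter_bounded_bound[OF assms(3) that])
  have D0: "0 \<le> D" using dle[OF xX xX] by simp
  have Dp: "D < pi/2" using assms(4) by (simp add: D_def)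
  have small: "\<forall>a\<in>X. \<forall>b\<in>X. dist a b < pi/2" using dle Dp by (meson le_less_trans)
  have k0: "cos D > 0" using D0 Dp by (intro cos_gt_zero_pi) auto
  have k0b: "\<forall>a\<in>X. \<forall>b\<in>X. cos D \<le> cos (dist a b)"
  proof (intro ballI)
    fix a b assume "a \<in> X" "b \<in> X"
    then have "dist a b \<le> D" by (rule dle)
    moreover have "D \<le> pi" using Dp pi_gt_zero by linarith
    ultimately show "cos D \<le> cos (dist a b)" by (intro cos_monotone_0_pi_le) auto
  qed
  interpret fv X "cos D" T
    by unfold_locales (use assms small k0 k0b in auto)
  show "\<exists>p\<in>{z\<in>X. T z = z}. Delta_convergent X (\<lambda>n. (T ^^ n) x) p"
    by (rule main[OF xX])
qed

end
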